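(* In the full-information setting, run Gaptron with gap map $a(\mathbf W_t,\mathbf x_t)=1-\mathbb 1[p_t^\star\ge 0.5]\,p_t^\star$, learning rate $\eta=\frac{\ln 2}{2KX^2}$, exploration rate $\gamma=0$, and the logistic loss $\ell_t(\mathbf W)=-\log_2\sigma(\mathbf W,\mathbf x_t,y_t)$. Then for every $\mathbf U\in\mathcal W$, $$\mathbb E\Big[\sum_{t=1}^T\mathbb 1[y'_t\ne y_t]\Big]\le\sum_{t=1}^T\ell_t(\mathbf U)+\frac{KX^2\|\mathbf U\|^2}{\ln 2}.$$
   Context: Setting and notation. Fix integers $K\ge 2$, $d\ge1$, $T\ge1$ and reals $X>0$, $D>0$. Matrices $\mathbf W\in\mathbb{R}^{K\times d}$ have rows $\mathbf W^1,\dots,\mathbf W^K\in\mathbb{R}^d$ and are identified with vectors in $\mathbb{R}^{Kd}$; $\langle\cdot,\cdot\rangle$ is the Euclidean inner product and $\|\cdot\|$ the Euclidean (Frobenius) norm. $\mathcal W=\{\mathbf W:\|\mathbf W\|\le D\}$. $\mathbf e_k$ is the $k$-th standard basis vector of $\mathbb R^K$ and $\mathbf 1\in\mathbb R^K$ the all-ones vector. In each round $t=1,\dots,T$ the environment chooses a label $y_t\in\{1,\dots,K\}$ and a feature vector $\mathbf x_t\in\mathbb R^d$ with $\|\mathbf x_t\|\le X$ (possibly depending on the learner's past predictions $y'_1,\dots,y'_{t-1}$ but not on its current random draw); the learner sees $\mathbf x_t$, outputs a random label $y'_t$, and then observes $y_t$ (full-information setting) or only $\mathbb 1[y'_t\ne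 y_t]$ (bandit setting). Gaptron, with learning rate $\eta>0$, exploration rate $\gamma\in[0,1]$, gap map $a:\mathbb R^{K\times d}\times\mathbb R^d\to[0,1]$ and loss functions $\ell_t$: set $\mathbf W_1=\mathbf 0$; for $t=1,\dots,T$: let $y_t^\star=\arg\max_k\langle \mathbf W_t^k,\mathbf x_t\rangle$ (ties broken arbitrarily), $a_t=a(\mathbf W_t,\mathbf x_t)$, $\mathbf p'_t=(1-\max\{a_t,\gamma\})\mathbf e_{y_t^\star}+\max\{a_t,\gamma\}\frac1K\mathbf 1$; draw $y'_t\sim\mathbf p'_t$ ($p'_t(k)$ denotes the probability of label $k$); set $\mathbf g_t=\nabla\ell_t(\mathbf W_t)$; update $\mathbf W_{t+1}=\arg\min_{\mathbf W\in\mathcal W}\ \eta\langle\mathbf g_t,\mathbf W\rangle+\frac12\|\mathbf W-\mathbf W_t\|^2$. $\mathbb E$ denotes expectation over the learner's randomization. Softmax: $\sigma(\mathbf W,\mathbf x,k)=\exp(\langle\mathbf W^k,\mathbf x\rangle)/\sum_{j=1}^K\exp(\langle\mathbf W^j,\mathbf x\rangle)$, and $p_t^\star=\max_k\sigma(\mathbf W_t,\mathbf x_t,k)$. *)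

theory Defs
  imports "HOL-Analysis.Analysis"
begin

text \<open>Weight matrices W in R^{K x d} are elements of real^'d^'k; the row W^k is W $ k.
  The norm on real^'d^'k is the Frobenius norm. Labels are elements of the finite type 'k
  (with CARD('k) = K).\<close>

definition softmax :: "real^'d^'k::finite \<Rightarrow> real^'d \<Rightarrow> 'k \<Rightarrow> real" where
  "softmax W x k = exp (W $ k \<bullet> x) / (\<Sum>j\<in>UNIV. exp (W $ j \<bullet> x))"

definition pstar :: "real^'d^'k::finite \<Rightarrow> real^'d \<Rightarrow> real" where
  "pstar W x = Max (range (softmax W x))"

definition gap_map :: "real^'d^'k::finite \<Rightarrow> real^'d \<Rightarrow> real" where
  "gap_map W x = 1 - (if pstar W x \<ge> 1/2 then pstar W x else 0)"

definition logloss :: "'k::finite \<Rightarrow> real^'d \<Rightarrow> real^'d^'k \<Rightarrow> real" where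
  "logloss y x W = - log 2 (softmax W x y)"

definition grad :: "('a::real_inner \<Rightarrow> real) \<Rightarrow> 'a \<Rightarrow> 'a" where
  "grad f W = (SOME g. (f has_derivative (\<lambda>h. g \<bullet> h)) (at W))"

definition proj_step :: "real \<Rightarrow> real \<Rightarrow> 'a::real_inner \<Rightarrow> 'a \<Rightarrow> 'a" where
  "proj_step eta D g W0 = (SOME W. norm W \<le> D \<and>
     (\<forall>V. norm V \<le> D \<longrightarrow>
        eta * (g \<bullet> W) + (norm (W - W0))^2 / 2 \<le> eta * (g \<bullet> V) + (norm (V - W0))^2 / 2))"

text \<open>The environment env maps the learner's past predictions [y'_1,...,y'_{t-1}]
  to the round-t pair (y_t, x_t).  Rounds are indexed from 0 here: round t sees the
  history of length t.  The loss family maps (y_t, x_t) to the function l_t.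
  gap_W t h is the weight matrix W_{t+1} (paper indexing) computed on the first t rounds
  of history h (full information: it uses y_s, x_s for s < t).\<close>
fun gap_W :: "real \<Rightarrow> real \<Rightarrow> ('k \<Rightarrow> real^'d \<Rightarrow> real^'d^'k \<Rightarrow> real)
      \<Rightarrow> ('k::finite list \<Rightarrow> 'k \<times> (real^'d)) \<Rightarrow> nat \<Rightarrow> 'k list \<Rightarrow> real^'d^'k" where
  "gap_W eta D loss env 0 h = 0"
| "gap_W eta D loss env (Suc t) h =
     (let W = gap_W eta D loss env t h; yx = env (take t h)
      in proj_step eta D (grad (loss (fst yx) (snd yx)) W) W)"

definition gap_prob :: "real \<Rightarrow> real \<Rightarrow> 'k \<Rightarrow> 'k::finite \<Rightarrow> real" where
  "gap_prob aval gamma ystar k =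
     (let m = max aval gamma in (if k = ystar then 1 - m else 0) + m / real CARD('k))"

text \<open>Prediction distribution at history h' (of length t, i.e. round t+1 in the paper).
  tie is the tie-breaking rule for the argmax (allowed to depend on the history).\<close>
definition gaptron_p ::
  "real \<Rightarrow> real \<Rightarrow> real \<Rightarrow> (real^'d^'k \<Rightarrow> real^'d \<Rightarrow> real)
   \<Rightarrow> ('k \<Rightarrow> real^'d \<Rightarrow> real^'d^'k \<Rightarrow> real)
   \<Rightarrow> ('k list \<Rightarrow> real^'d^'k \<Rightarrow> real^'d \<Rightarrow> 'k)
   \<Rightarrow> ('k::finite list \<Rightarrow> 'k \<times> (real^'d)) \<Rightarrow> 'k list \<Rightarrow> 'k \<Rightarrow> real" where
  "gaptron_p eta gamma D a loss tie env h' k =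
     (let W = gap_W eta D loss env (length h') h'; x = snd (env h')
      in gap_prob (a W x) gamma (tie h' W x) k)"

definition hist_prob ::
  "real \<Rightarrow> real \<Rightarrow> real \<Rightarrow> (real^'d^'k \<Rightarrow> real^'d \<Rightarrow> real)
   \<Rightarrow> ('k \<Rightarrow> real^'d \<Rightarrow> real^'d^'k \<Rightarrow> real)
   \<Rightarrow> ('k list \<Rightarrow> real^'d^'k \<Rightarrow> real^'d \<Rightarrow> 'k)
   \<Rightarrow> ('k::finite list \<Rightarrow> 'k \<times> (real^'d)) \<Rightarrow> 'k list \<Rightarrow> real" where
  "hist_prob eta gamma D a loss tie env h =
     (\<Prod>t<length h. gaptron_p eta gamma D a loss tie env (take t h) (h ! t))"

definition gaptron_E ::
  "real \<Rightarrow> real \<Rightarrow> real \<Rightarrow> (real^'d^'k \<Rightarrow> real^'d \<Rightarrow> real)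
   \<Rightarrow> ('k \<Rightarrow> real^'d \<Rightarrow> real^'d^'k \<Rightarrow> real)
   \<Rightarrow> ('k list \<Rightarrow> real^'d^'k \<Rightarrow> real^'d \<Rightarrow> 'k)
   \<Rightarrow> ('k::finite list \<Rightarrow> 'k \<times> (real^'d)) \<Rightarrow> nat \<Rightarrow> ('k list \<Rightarrow> real) \<Rightarrow> real" where
  "gaptron_E eta gamma D a loss tie env T f =
     (\<Sum>h\<in>{h. length h = T}. hist_prob eta gamma D a loss tie env h * f h)"

end

theory Submission
  imports Defs
begin


definition GG :: "'k::finite \<Rightarrow> real^'d \<Rightarrow> real^'d^'k \<Rightarrow> real^'d^'k" where
  "GG y x W = (\<chi> k. ((softmax W x k - (if k = y then 1 else 0)) / ln 2) *\<^sub>R x)"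

lemma Z_pos: "(\<Sum>j\<in>UNIV. exp (W $ j \<bullet> x)) > (0::real)"
  by (rule sum_pos) auto

lemma logloss_eq: "logloss y x W = (ln (\<Sum>j\<in>UNIV. exp (W $ j \<bullet> x)) - W $ y \<bullet> x) / ln 2"
  unfolding logloss_def softmax_def log_def using Z_pos[of W x]
  by (simp add: ln_div field_simps)

lemma lin_nth_inner: "bounded_linear (\<lambda>W::real^'d^'k::finite. W $ j \<bullet> x)"
  by (rule bounded_linear_compose[where f="\<lambda>v. v \<bullet> x" and g="\<lambda>W. W $ j", OF bounded_linear_inner_left bounded_linear_vec_nth])

lemma deriv_lse:
  "((\<lambda>W::real^'d^'k::finite. ln (\<Sum>j\<in>UNIV. exp (W $ j \<bullet> x)) - W $ y \<bullet> x) has_derivative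
     (\<lambda>h. (\<Sum>j\<in>UNIV. (h $ j \<bullet> x) * exp (W $ j \<bullet> x)) * inverse (\<Sum>j\<in>UNIV. exp (W $ j \<bullet> x)) - h $ y \<bullet> x)) (at W)"
  apply (intro has_derivative_diff has_derivative_ln has_derivative_sum has_derivative_exp
      bounded_linear.has_derivative[OF lin_nth_inner] Z_pos has_derivative_ident)
  done

lemma GG_inner: "GG y x W \<bullet> h = ((\<Sum>j\<in>UNIV. (h $ j \<bullet> x) * exp (W $ j \<bullet> x)) * inverse (\<Sum>j\<in>UNIV. exp (W $ j \<bullet> x)) - h $ y \<bullet> x) / ln 2"
proof -
  have "GG y x W \<bullet> h = (\<Sum>k\<in>UNIV. (softmax W x k - (if k = y then 1 else 0)) / ln 2 * (h $ k \<bullet> x))"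
    by (subst inner_vec_def) (simp add: GG_def inner_commute)
  also have "\<dots> = ((\<Sum>k\<in>UNIV. softmax W x k * (h $ k \<bullet> x)) - h $ y \<bullet> x) / ln 2"
  proof -
    have "\<And>k. (softmax W x k - (if k = y then 1 else 0)) / ln 2 * (h $ k \<bullet> x)
       = (softmax W x k * (h $ k \<bullet> x) - (if k = y then h $ k \<bullet> x else 0)) / ln 2"
      by (simp add: field_simps)
    then show ?thesis
      by (simp add: sum_divide_distrib[symmetric] sum_subtractf)
  qed
  also have "(\<Sum>k\<in>UNIV. softmax W x k * (h $ k \<bullet> x)) = (\<Sum>j\<in>UNIV. (h $ j \<bullet> x) * exp (W $ j \<bullet> x)) * inverse (\<Sum>j\<in>UNIV. exp (W $ j \<bullet> x))"
    unfolding softmax_def sum_distrib_right by (rule sum.cong) (simp_all add: divide_inverse)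
  finally show ?thesis .
qed

lemma deriv_logloss: "(logloss y x has_derivative (\<lambda>h. GG y x W \<bullet> h)) (at W)"
proof -
  have "((\<lambda>W. (ln (\<Sum>j\<in>UNIV. exp (W $ j \<bullet> x)) - W $ y \<bullet> x) / ln 2) has_derivative
     (\<lambda>h. ((\<Sum>j\<in>UNIV. (h $ j \<bullet> x) * exp (W $ j \<bullet> x)) * inverse (\<Sum>j\<in>UNIV. exp (W $ j \<bullet> x)) - h $ y \<bullet> x) / ln 2)) (at W)"
    using has_derivative_mult[OF deriv_lse has_derivative_const[of "inverse (ln 2)"]]
    by (simp add: divide_inverse)
  then show ?thesis unfolding GG_inner by (simp add: logloss_eq[abs_def])
qed

lemma grad_logloss: "grad (logloss y x) W = GG y x W"
proof -
  have ex: "\<exists>g. (logloss y x has_derivative (\<lambda>h. g \<bullet> h)) (at W)" using deriv_logloss by blast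
  define g where "g = grad (logloss y x) W"
  have "(logloss y x has_derivative (\<lambda>h. g \<bullet> h)) (at W)"
    unfolding g_def grad_def by (rule someI_ex[OF ex])
  from has_derivative_unique[OF this deriv_logloss]
  have "\<And>h. g \<bullet> h = GG y x W \<bullet> h" by metis
  then have "(g - GG y x W) \<bullet> (g - GG y x W) = 0" by (simp add: inner_diff_left)
  then show ?thesis unfolding g_def by simp
qed

lemma lse_convex:
  fixes a b :: "'k::finite \<Rightarrow> real"
  shows "ln (\<Sum>j\<in>UNIV. exp (a j)) + (\<Sum>j\<in>UNIV. (b j - a j) * exp (a j)) / (\<Sum>j\<in>UNIV. exp (a j))
     \<le> ln (\<Sum>j\<in>UNIV. exp (b j))"
proof -
  define Z where "Z = (\<Sum>j\<in>UNIV. exp (a j))"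
  define m where "m = (\<Sum>j\<in>UNIV. (b j - a j) * exp (a j)) / Z"
  have Z: "Z > 0" unfolding Z_def by (rule sum_pos) auto
  have "\<And>j. exp (a j) * exp m * (1 + (b j - a j - m)) \<le> exp (b j)"
  proof -
    fix j
    have "1 + (b j - a j - m) \<le> exp (b j - a j - m)" by (rule exp_ge_add_one_self)
    then have "exp (a j) * exp m * (1 + (b j - a j - m)) \<le> exp (a j) * exp m * exp (b j - a j - m)"
      by (intro mult_left_mono) auto
    also have "\<dots> = exp (b j)" by (simp flip: exp_add)
    finally show "exp (a j) * exp m * (1 + (b j - a j - m)) \<le> exp (b j)" .
  qed
  then have "(\<Sum>j\<in>UNIV. exp (a j) * exp m * (1 + (b j - a j - m))) \<le> (\<Sum>j\<in>UNIV. exp (b j))"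
    by (rule sum_mono)
  also have "(\<Sum>j\<in>UNIV. exp (a j) * exp m * (1 + (b j - a j - m)))
     = exp m * (Z + (\<Sum>j\<in>UNIV. (b j - a j) * exp (a j)) - m * Z)"
    by (simp add: Z_def algebra_simps sum.distrib sum_subtractf sum_distrib_left sum_distrib_right)
  also have "Z + (\<Sum>j\<in>UNIV. (b j - a j) * exp (a j)) - m * Z = Z"
    using Z unfolding m_def by simp
  finally have "exp m * Z \<le> (\<Sum>j\<in>UNIV. exp (b j))" .
  then have "ln (exp m * Z) \<le> ln (\<Sum>j\<in>UNIV. exp (b j))"
    using Z by (subst ln_le_cancel_iff) (auto intro: sum_pos)
  then show ?thesis using Z by (simp add: ln_mult Z_def[symmetric] m_def[symmetric])
qed

lemma logloss_convex:
  "logloss y x W + GG y x W \<bullet> (U - W) \<le> logloss y x U"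
proof -
  have L: "ln (\<Sum>j\<in>UNIV. exp (W $ j \<bullet> x)) + (\<Sum>j\<in>UNIV. (U $ j \<bullet> x - W $ j \<bullet> x) * exp (W $ j \<bullet> x)) / (\<Sum>j\<in>UNIV. exp (W $ j \<bullet> x))
     \<le> ln (\<Sum>j\<in>UNIV. exp (U $ j \<bullet> x))"
    by (rule lse_convex[of "\<lambda>j. W $ j \<bullet> x" "\<lambda>j. U $ j \<bullet> x"])
  have "(\<Sum>j\<in>UNIV. (U - W) $ j \<bullet> x * exp (W $ j \<bullet> x)) = (\<Sum>j\<in>UNIV. (U $ j \<bullet> x - W $ j \<bullet> x) * exp (W $ j \<bullet> x))"
    by (simp add: inner_diff_left)
  with L have Lm: "ln (\<Sum>j\<in>UNIV. exp (W $ j \<bullet> x)) + (\<Sum>j\<in>UNIV. (U - W) $ j \<bullet> x * exp (W $ j \<bullet> x)) * inverse (\<Sum>j\<in>UNIV. exp (W $ j \<bullet> x))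
     \<le> ln (\<Sum>j\<in>UNIV. exp (U $ j \<bullet> x))" by (simp add: divide_inverse)
  have key: "\<And>A m B Wy Uy L::real. A + m \<le> B \<Longrightarrow> L > 0 \<Longrightarrow> (A - Wy) / L + (m - (Uy - Wy)) / L \<le> (B - Uy) / L"
    by (simp add: divide_right_mono diff_divide_distrib[symmetric] add_divide_distrib[symmetric])
  have e: "(U - W) $ y \<bullet> x = U $ y \<bullet> x - W $ y \<bullet> x" by (simp add: inner_diff_left)
  show ?thesis unfolding logloss_eq GG_inner e
    by (rule key[OF Lm]) simp
qed

lemma pos_lin_limit:
  fixes c q :: real
  assumes q: "q \<ge> 0" and h: "\<And>l. 0 < l \<Longrightarrow> l \<le> 1 \<Longrightarrow> 0 \<le> c + l * q / 2"
  shows "0 \<le> c"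
proof (rule ccontr)
  assume c: "\<not> 0 \<le> c"
  show False
  proof (cases "q = 0")
    case True then show False using h[of 1] c by simp
  next
    case False
    then have qp: "q > 0" using q by simp
    define l where "l = min 1 (- c / q)"
    have l0: "0 < l" using c qp divide_neg_pos[of c q] unfolding l_def by simp
    have l1: "l \<le> 1" unfolding l_def by simp
    have "l * q \<le> (- c / q) * q" unfolding l_def using qp by (intro mult_right_mono) auto
    then have "l * q \<le> - c" using qp by simp
    then have "c + l * q / 2 < 0" using c by simp
    then show False using h[OF l0 l1] by simp
  qed
qed

lemma sq_add: "(norm (A + B))^2 = (norm A)^2 + 2 * (A \<bullet> B) + (norm (B::'a::real_inner))^2"
  by (simp add: power2_norm_eq_inner inner_add_left inner_add_right inner_commute)

lemma proj_step_bound: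
  fixes g W0 U :: "'a::euclidean_space"
  assumes eta: "eta > 0" and D: "D \<ge> 0" and U: "norm U \<le> D"
  shows "eta * (g \<bullet> (W0 - U)) \<le> (norm (W0 - U))^2 / 2 - (norm (proj_step eta D g W0 - U))^2 / 2
            + eta^2 / 2 * (norm g)^2"
proof -
  define F where "F V = eta * (g \<bullet> V) + (norm (V - W0))^2 / 2" for V
  have "\<exists>W\<in>cball 0 D. \<forall>V\<in>cball 0 D. F W \<le> F V"
    by (rule continuous_attains_inf) (use D in \<open>auto simp: F_def intro!: continuous_intros\<close>)
  then have ex: "\<exists>W. norm W \<le> D \<and> (\<forall>V. norm V \<le> D \<longrightarrow>
        eta * (g \<bullet> W) + (norm (W - W0))^2 / 2 \<le> eta * (g \<bullet> V) + (norm (V - W0))^2 / 2)"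
    by (auto simp: F_def)
  define W where "W = proj_step eta D g W0"
  have W: "norm W \<le> D" and Wmin: "\<And>V. norm V \<le> D \<Longrightarrow> F W \<le> F V"
    using someI_ex[OF ex] unfolding W_def proj_step_def F_def by auto
  define d where "d = U - W"
  define c where "c = eta * (g \<bullet> d) + (W - W0) \<bullet> d"
  have expand: "F (W + l *\<^sub>R d) = F W + l * c + l^2 * (norm d)^2 / 2" for l
  proof -
    have e1: "W + l *\<^sub>R d - W0 = (W - W0) + l *\<^sub>R d" by simp
    have N: "(norm (W + l *\<^sub>R d - W0))^2 = (norm (W - W0))^2 + 2 * l * ((W - W0) \<bullet> d) + l^2 * (norm d)^2"
      unfolding e1 sq_add by (simp add: power_mult_distrib)
    have G: "g \<bullet> (W + l *\<^sub>R d) = g \<bullet> W + l * (g \<bullet> d)" by (simp add: inner_add_right)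
    have key: "\<And>a b e p q r l::real. e * (a + l * b) + (p + 2 * l * q + l^2 * r) / 2 = e * a + p / 2 + l * (e * b + q) + l^2 * r / 2"
      by (simp add: algebra_simps add_divide_distrib)
    show ?thesis unfolding F_def c_def N G by (rule key)
  qed
  have cl: "0 \<le> c + l * (norm d)^2 / 2" if l: "0 < l" "l \<le> 1" for l
  proof -
    have "W + l *\<^sub>R d = (1 - l) *\<^sub>R W + l *\<^sub>R U" by (simp add: d_def algebra_simps)
    then have "norm (W + l *\<^sub>R d) \<le> (1 - l) * norm W + l * norm U"
      using l by (metis abs_of_nonneg diff_ge_0_iff_ge less_eq_real_def norm_scaleR norm_triangle_ineq)
    also have "\<dots> \<le> (1 - l) * D + l * D"
      using l W U by (intro add_mono mult_left_mono) auto
    finally have "norm (W + l *\<^sub>R d) \<le> D" by (simp add: algebra_simps)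
    from Wmin[OF this] have "0 \<le> l * c + l^2 * (norm d)^2 / 2" unfolding expand by simp
    then have "0 \<le> l * (c + l * (norm d)^2 / 2)" by (simp add: algebra_simps power2_eq_square)
    then show ?thesis using l by (simp add: zero_le_mult_iff)
  qed
  have c0: "0 \<le> c" by (rule pos_lin_limit[OF _ cl]) simp_all
  define A where "A = W0 - W"
  define B where "B = W - U"
  have dB: "d = - B" unfolding d_def B_def by simp
  have c': "c = - eta * (g \<bullet> B) + A \<bullet> B"
    unfolding c_def dB A_def by (simp add: inner_minus_left inner_minus_right inner_commute[of "W - W0"] inner_diff_left inner_diff_right)
  have sq: "0 \<le> (norm (eta *\<^sub>R g - A))^2" by simp
  have sq2: "(norm (eta *\<^sub>R g - A))^2 = eta^2 * (norm g)^2 - 2 * eta * (g \<bullet> A) + (norm A)^2"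
  proof -
    have e: "(norm (eta *\<^sub>R g - A))^2 = (norm (eta *\<^sub>R g))^2 + 2 * ((eta *\<^sub>R g) \<bullet> (- A)) + (norm (- A))^2"
      using sq_add[of "eta *\<^sub>R g" "- A"] by simp
    then show ?thesis by (simp add: power_mult_distrib)
  qed
  have n1: "W0 - U = A + B" unfolding A_def B_def by simp
  have gi: "g \<bullet> (W0 - U) = g \<bullet> A + g \<bullet> B" unfolding n1 by (simp add: inner_add_right)
  have f1: "eta * (g \<bullet> B) \<le> A \<bullet> B" using c0 c' by simp
  have f2: "2 * (eta * (g \<bullet> A)) \<le> (norm A)^2 + eta^2 * (norm g)^2" using sq sq2 by simp
  have key: "\<And>ga gb ab na nb ng::real. gb \<le> ab \<Longrightarrow> 2 * ga \<le> na + ng \<Longrightarrow>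
      ga + gb \<le> (na + 2 * ab + nb) / 2 - nb / 2 + ng / 2" by (auto simp: field_simps)
  have r1: "eta * (g \<bullet> A + g \<bullet> B) = eta * (g \<bullet> A) + eta * (g \<bullet> B)" by (simp add: distrib_left)
  have r2: "eta^2 / 2 * (norm g)^2 = (eta^2 * (norm g)^2) / 2" by simp
  show ?thesis
    unfolding W_def[symmetric] B_def[symmetric] gi r1 r2 unfolding n1 sq_add
    by (rule key[OF f1 f2])
qed

lemma sm_pos: "softmax W x k > 0"
  unfolding softmax_def by (intro divide_pos_pos sum_pos) auto

lemma sm_sum: "(\<Sum>k\<in>UNIV. softmax W x k) = 1"
proof -
  have "(\<Sum>j\<in>UNIV. exp (W $ j \<bullet> x)) > 0" by (rule sum_pos) auto
  then show ?thesis unfolding softmax_def by (simp add: sum_divide_distrib[symmetric])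
qed

lemma sm_other:
  assumes "y \<noteq> ys" shows "softmax W x y \<le> 1 - softmax W x ys"
proof -
  have "(\<Sum>k\<in>{y, ys}. softmax W x k) \<le> (\<Sum>k\<in>UNIV. softmax W x k)"
    by (rule sum_mono2) (auto intro: less_imp_le[OF sm_pos])
  then show ?thesis using assms sm_sum[of W x] by simp
qed

lemma sm_le1: "softmax W x y \<le> 1"
proof -
  have "(\<Sum>k\<in>{y}. softmax W x k) \<le> (\<Sum>k\<in>UNIV. softmax W x k)"
    by (rule sum_mono2) (auto intro: less_imp_le[OF sm_pos])
  then show ?thesis using sm_sum[of W x] by simp
qed

lemma sm_tie:
  assumes "\<forall>j. W $ j \<bullet> x \<le> W $ ys \<bullet> x" shows "pstar W x = softmax W x ys"
  unfolding pstar_def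
proof (rule Max_eqI)
  fix z assume "z \<in> range (softmax W x)"
  then obtain j where z: "z = softmax W x j" by auto
  have "(\<Sum>j\<in>UNIV. exp (W $ j \<bullet> x)) > 0" by (rule sum_pos) auto
  then show "z \<le> softmax W x ys" unfolding z softmax_def using assms
    by (intro divide_right_mono) auto
qed auto

lemma norm_GG: "(norm (GG y x W))^2 = (\<Sum>k\<in>UNIV. ((softmax W x k - (if k = y then 1 else 0)) / ln 2)^2) * (norm x)^2"
  unfolding power2_norm_eq_inner
  by (subst inner_vec_def) (simp add: GG_def sum_distrib_right power2_eq_square mult.assoc)

lemma sumsq_le:
  fixes f :: "'a \<Rightarrow> real"
  assumes "finite A" "\<And>k. k \<in> A \<Longrightarrow> f k \<ge> 0"
  shows "(\<Sum>k\<in>A. (f k)^2) \<le> (\<Sum>k\<in>A. f k)^2"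
proof -
  have "(\<Sum>k\<in>A. (f k)^2) \<le> (\<Sum>k\<in>A. f k * (\<Sum>j\<in>A. f j))"
    using assms by (intro sum_mono) (auto simp: power2_eq_square intro!: mult_left_mono member_le_sum)
  also have "\<dots> = (\<Sum>k\<in>A. f k)^2" by (simp add: power2_eq_square sum_distrib_right)
  finally show ?thesis .
qed

lemma S_bound:
  "(\<Sum>k\<in>UNIV. (softmax W x k - (if k = y then 1 else 0))^2) \<le> 2 * (1 - softmax W x y)^2"
proof -
  have "(\<Sum>k\<in>UNIV. (softmax W x k - (if k = y then 1 else 0))^2)
      = (softmax W x y - 1)^2 + (\<Sum>k\<in>UNIV - {y}. (softmax W x k)^2)"
    by (subst sum.remove[of _ y]) (auto intro!: sum.cong)
  also have "(\<Sum>k\<in>UNIV - {y}. (softmax W x k)^2) \<le> (\<Sum>k\<in>UNIV - {y}. softmax W x k)^2"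
    by (rule sumsq_le) (auto intro: less_imp_le[OF sm_pos])
  also have "(\<Sum>k\<in>UNIV - {y}. softmax W x k) = 1 - softmax W x y"
    using sum.remove[of UNIV y "softmax W x"] sm_sum[of W x] by simp
  finally show ?thesis by (simp add: power2_eq_square algebra_simps)
qed

lemma T_bound:
  assumes X: "X > 0" and x: "norm x \<le> X" and K: "K > 0"
  shows "(ln 2 / (2 * K * X^2)) / 2 * (norm (GG y x W))^2 \<le> (1 - softmax W x y)^2 / (2 * K * ln 2)"
proof -
  define S where "S = (\<Sum>k\<in>UNIV. (softmax W x k - (if k = y then 1 else 0))^2)"
  have L: "ln (2::real) > 0" by simp
  have "(norm (GG y x W))^2 = S / (ln 2)^2 * (norm x)^2"
    unfolding norm_GG S_def by (simp add: power_divide sum_divide_distrib)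
  then have "(ln 2 / (2 * K * X^2)) / 2 * (norm (GG y x W))^2 = S / (4 * K * ln 2) * ((norm x)^2 / X^2)"
    using L X K by (simp add: field_simps power2_eq_square)
  also have "\<dots> \<le> S / (4 * K * ln 2) * 1"
  proof (rule mult_left_mono)
    show "(norm x)^2 / X^2 \<le> 1" using x X by (simp add: power_mono)
    show "0 \<le> S / (4 * K * ln 2)" unfolding S_def using K L by (intro divide_nonneg_pos sum_nonneg) auto
  qed
  also have "\<dots> = S / (4 * K * ln 2)" by simp
  also have "\<dots> \<le> (2 * (1 - softmax W x y)^2) / (4 * K * ln 2)"
    using S_bound[of W x y] K L unfolding S_def by (intro divide_right_mono) auto
  finally show ?thesis by simp
qed

lemma ln2_ge: "ln (2::real) \<ge> 1/2"
proof -
  have "ln (1/2::real) \<le> 1/2 - 1" by (rule ln_le_minus_one) simp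
  then show ?thesis by (simp add: ln_div)
qed

lemma ln2_lt: "ln (2::real) < 1" by (rule ln_2_less_1)

lemma core1:
  fixes s K T :: real
  assumes s: "0 < s" "s < 1/2" and K: "K \<ge> 2" and T: "T \<le> (1 - s)^2 / (2 * K * ln 2)"
  shows "1 - 1 / K + T \<le> - ln s / ln 2"
proof -
  have L: "ln (2::real) \<ge> 1/2" by (rule ln2_ge)
  have "ln s < ln (1/2)" using s by simp
  then have "- ln s > ln 2" by (simp add: ln_div)
  then have r: "- ln s / ln 2 > 1" using L by (subst less_divide_eq_1_pos) auto
  have "(1 - s)^2 \<le> 1" using s by (simp add: power_le_one)
  then have "(1 - s)^2 / (2 * K * ln 2) \<le> 1 / (2 * K * ln 2)" using K L
    by (intro divide_right_mono) auto
  also have "\<dots> \<le> 1 / K" using K L by (simp add: field_simps)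
  finally show ?thesis using T r by linarith
qed

lemma core2:
  fixes s K T :: real
  assumes s: "0 < s" "s \<le> 1" and K: "K \<ge> 2" and T: "T \<le> (1 - s)^2 / (2 * K * ln 2)"
  shows "1 - (s + (1 - s) / K) + T \<le> - ln s / ln 2"
proof -
  have L: "ln (2::real) \<ge> 1/2" by (rule ln2_ge)
  have L1: "ln (2::real) < 1" by (rule ln2_lt)
  have "ln s \<le> s - 1" using s by (intro ln_le_minus_one) auto
  then have "1 - s \<le> - ln s" by simp
  then have r: "(1 - s) / ln 2 \<le> - ln s / ln 2" using L by (intro divide_right_mono) auto
  have sl: "(1 - s) * ln 2 \<le> 1 - s" using mult_left_mono[of "ln 2" 1 "1 - s"] s L1 by simp
  have q: "(1 - s)^2 \<le> 1 - s" using s mult_left_mono[of "1 - s" 1 "1 - s"] by (simp add: power2_eq_square)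
  have "(1 - s)^2 / (2 * K * ln 2) \<le> (1 - s) / (2 * K * ln 2)" using K L q
    by (intro divide_right_mono) auto
  also have "\<dots> \<le> (1 - s) / K"
  proof (rule divide_left_mono)
    show "K \<le> 2 * K * ln 2" using mult_left_mono[of 1 "2 * ln 2" K] K L by simp
  qed (use K L s in auto)
  finally have "1 - (s + (1 - s) / K) + T \<le> 1 - s" using T by (simp add: field_simps)
  also have "\<dots> \<le> (1 - s) / ln 2" using sl L by (simp add: le_divide_eq)
  finally show ?thesis using r by linarith
qed

lemma core3:
  fixes s p K T :: real
  assumes s: "0 < s" "s \<le> 1 - p" and p: "p \<ge> 1/2" and K: "K \<ge> 2" and T: "T \<le> (1 - s)^2 / (2 * K * ln 2)"
  shows "1 - (1 - p) / K + T \<le> - ln s / ln 2"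
proof -
  have L: "ln (2::real) \<ge> 1/2" by (rule ln2_ge)
  have s2: "s \<le> 1/2" using s p by simp
  have "ln (2 * s) \<le> 2 * s - 1" using s by (intro ln_le_minus_one) auto
  then have "ln 2 + 1 - 2 * s \<le> - ln s" using s by (simp add: ln_mult)
  then have r: "(ln 2 + 1 - 2 * s) / ln 2 \<le> - ln s / ln 2" using L by (intro divide_right_mono) auto
  have m: "1 - (1 - p) / K \<le> 1 - s / K" using s K by (simp add: divide_right_mono)
  have key: "(1 - s)^2 - 2 * s * ln 2 \<le> 2 * K * (1 - 2 * s)"
  proof -
    have "2 * K * (1 - 2 * s) \<ge> 4 * (1 - 2 * s)" using K s2 by (intro mult_right_mono) auto
    moreover have "s * s \<le> s / 2" using s s2 by (simp add: mult_left_le)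
    moreover have "s * ln 2 \<ge> s / 2" using s L by (simp add: mult_left_mono)
    ultimately show ?thesis using s2 by (simp add: power2_eq_square algebra_simps)
  qed
  have "1 - s / K + (1 - s)^2 / (2 * K * ln 2) \<le> (ln 2 + 1 - 2 * s) / ln 2"
  proof -
    have pos: "2 * K * ln 2 > 0" using K L by simp
    have "(1 - s / K + (1 - s)^2 / (2 * K * ln 2)) * (2 * K * ln 2) = 2 * K * ln 2 - 2 * s * ln 2 + (1 - s)^2"
      using K L by (simp add: field_simps)
    also have "\<dots> \<le> 2 * K * ln 2 + 2 * K * (1 - 2 * s)" using key by simp
    also have "\<dots> = ((ln 2 + 1 - 2 * s) / ln 2) * (2 * K * ln 2)" using K L by (simp add: field_simps)
    finally show ?thesis using pos by (simp only: mult_le_cancel_right_pos)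
  qed
  then show ?thesis using T m r by linarith
qed

lemma sm_le_tie:
  assumes "\<forall>j. W $ j \<bullet> x \<le> W $ ys \<bullet> x" shows "softmax W x y \<le> softmax W x ys"
proof -
  have "(\<Sum>j\<in>UNIV. exp (W $ j \<bullet> x)) > 0" by (rule sum_pos) auto
  then show ?thesis unfolding softmax_def using assms by (intro divide_right_mono) auto
qed

lemma gap_round:
  fixes W :: "real^'d^'k::finite"
  assumes K: "real CARD('k) \<ge> 2" and X: "X > 0" and x: "norm x \<le> X"
    and ys: "\<forall>j. W $ j \<bullet> x \<le> W $ ys \<bullet> x"
  shows "1 - gap_prob (gap_map W x) 0 ys y + (ln 2 / (2 * real CARD('k) * X^2)) / 2 * (norm (GG y x W))^2
     \<le> logloss y x W"
proof -
  define K where "K = real CARD('k)"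
  define p where "p = softmax W x ys"
  define s where "s = softmax W x y"
  define T where "T = (ln 2 / (2 * K * X^2)) / 2 * (norm (GG y x W))^2"
  have T: "T \<le> (1 - s)^2 / (2 * K * ln 2)" unfolding T_def s_def
    by (rule T_bound) (use X x K K_def in auto)
  have ps: "pstar W x = p" unfolding p_def by (rule sm_tie[OF ys])
  have s0: "0 < s" unfolding s_def by (rule sm_pos)
  have sp: "s \<le> p" unfolding s_def p_def by (rule sm_le_tie[OF ys])
  have p1: "p \<le> 1" unfolding p_def by (rule sm_le1)
  have ll: "logloss y x W = - ln s / ln 2" unfolding logloss_def log_def s_def by simp
  have K2: "K \<ge> 2" using K K_def by simp
  show ?thesis
  proof (cases "p \<ge> 1/2")
    case False
    then have gp: "gap_prob (gap_map W x) 0 ys y = 1 / K"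
      unfolding gap_prob_def gap_map_def ps K_def by (simp add: Let_def)
    show ?thesis unfolding gp ll T_def[symmetric, unfolded K_def]
      using core1[OF s0 _ K2 T] sp False by simp
  next
    case True
    show ?thesis
    proof (cases "y = ys")
      case True
      then have sp': "s = p" unfolding s_def p_def by simp
      have gp: "gap_prob (gap_map W x) 0 ys y = s + (1 - s) / K"
        unfolding gap_prob_def gap_map_def ps K_def using \<open>p \<ge> 1/2\<close> p1 True sp' by (simp add: Let_def)
      show ?thesis unfolding gp ll T_def[symmetric, unfolded K_def]
        using core2[OF s0 _ K2 T] sp p1 unfolding K_def by simp
    next
      case False
      have gp: "gap_prob (gap_map W x) 0 ys y = (1 - p) / K"
        unfolding gap_prob_def gap_map_def ps K_def using \<open>p \<ge> 1/2\<close> p1 False by (simp add: Let_def)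
      have "s \<le> 1 - p" unfolding s_def p_def by (rule sm_other[OF False])
      then show ?thesis unfolding gp ll T_def[symmetric, unfolded K_def]
        using core3[OF s0 _ \<open>p \<ge> 1/2\<close> K2 T] unfolding K_def by simp
    qed
  qed
qed



definition HP :: "('k list \<Rightarrow> 'k \<Rightarrow> real) \<Rightarrow> 'k list \<Rightarrow> real" where
  "HP P h = (\<Prod>t<length h. P (take t h) (h ! t))"

lemma HP_snoc: "HP P (h @ [k]) = HP P h * P h k"
proof -
  have "(\<Prod>t<length h. P (take t (h @ [k])) ((h @ [k]) ! t)) = (\<Prod>t<length h. P (take t h) (h ! t))"
    by (rule prod.cong) (auto simp: nth_append)
  then show ?thesis unfolding HP_def by simp
qed

lemma HP_nonneg: "(\<And>h k. P h k \<ge> 0) \<Longrightarrow> HP P h \<ge> 0"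
  unfolding HP_def by (intro prod_nonneg) auto

lemma fin_len: "finite {h::'k::finite list. length h = n}"
  using finite_lists_length_eq[of "UNIV::'k set" n] by simp

lemma lists_Suc:
  fixes F :: "'k::finite list \<Rightarrow> real"
  shows "(\<Sum>h\<in>{h. length h = Suc n}. F h) = (\<Sum>h\<in>{h. length h = n}. \<Sum>k\<in>UNIV. F (h @ [k]))"
proof -
  have img: "{h::'k list. length h = Suc n} = (\<lambda>(h, k). h @ [k]) ` ({h. length h = n} \<times> UNIV)"
  proof (rule set_eqI, rule iffI)
    fix h :: "'k list" assume "h \<in> {h. length h = Suc n}"
    then have "h = butlast h @ [last h]" "length (butlast h) = n"
      by (auto intro: append_butlast_last_id[symmetric])
    then show "h \<in> (\<lambda>(h, k). h @ [k]) ` ({h. length h = n} \<times> UNIV)"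
      by (metis (mono_tags, lifting) UNIV_I case_prod_conv image_eqI mem_Collect_eq mem_Sigma_iff)
  qed auto
  have inj: "inj_on (\<lambda>(h, k). h @ [k]) ({h::'k list. length h = n} \<times> UNIV)"
    by (auto simp: inj_on_def)
  show ?thesis
    unfolding img sum.reindex[OF inj] sum.cartesian_product
    by (rule sum.cong) auto
qed

lemma E_step:
  fixes P :: "'k::finite list \<Rightarrow> 'k \<Rightarrow> real"
  shows "(\<Sum>h\<in>{h. length h = Suc t}. HP P h * phi (take t h) (h ! t))
       = (\<Sum>h\<in>{h. length h = t}. HP P h * (\<Sum>k\<in>UNIV. P h k * phi h k))"
  unfolding lists_Suc
  by (rule sum.cong) (auto simp: HP_snoc sum_distrib_left mult.assoc)

lemma E_marg:
  fixes P :: "'k::finite list \<Rightarrow> 'k \<Rightarrow> real"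
  assumes P1: "\<And>h. (\<Sum>k\<in>UNIV. P h k) = 1" and mn: "m \<le> n"
  shows "(\<Sum>h\<in>{h. length h = n}. HP P h * g (take m h)) = (\<Sum>h\<in>{h. length h = m}. HP P h * g h)"
  using mn
proof (induction n rule: dec_induct)
  case base
  show ?case by (rule sum.cong) auto
next
  case (step n)
  have "(\<Sum>h\<in>{h. length h = Suc n}. HP P h * g (take m h))
      = (\<Sum>h\<in>{h. length h = n}. \<Sum>k\<in>UNIV. HP P h * P h k * g (take m h))"
    unfolding lists_Suc using step(1)
    by (intro sum.cong) (auto simp: HP_snoc)
  also have "\<dots> = (\<Sum>h\<in>{h. length h = n}. HP P h * g (take m h))"
    by (rule sum.cong) (auto simp: sum_distrib_right[symmetric] sum_distrib_left[symmetric] P1 mult.commute mult.left_commute)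
  finally show ?case using step(3) by simp
qed

lemma E_one:
  fixes P :: "'k::finite list \<Rightarrow> 'k \<Rightarrow> real"
  assumes P1: "\<And>h. (\<Sum>k\<in>UNIV. P h k) = 1"
  shows "(\<Sum>h\<in>{h. length h = n}. HP P h) = 1"
  using E_marg[OF P1, where m=0 and n=n and g="\<lambda>_. 1"] by (simp add: HP_def)

lemma E_mistake:
  fixes P :: "'k::finite list \<Rightarrow> 'k \<Rightarrow> real"
  assumes P1: "\<And>h. (\<Sum>k\<in>UNIV. P h k) = 1" and t: "t < n"
  shows "(\<Sum>h\<in>{h. length h = n}. HP P h * (if h ! t \<noteq> y (take t h) then 1 else 0))
       = (\<Sum>h\<in>{h. length h = n}. HP P h * (1 - P (take t h) (y (take t h))))"
proof -
  define g1 where "g1 h' = (if h' ! t \<noteq> y (take t h') then 1 else 0 :: real)" for h'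
  define phi where "phi a b = (if b \<noteq> y a then 1 else 0 :: real)" for a b
  define g2 where "g2 h' = 1 - P h' (y h')" for h'
  have "(\<Sum>h\<in>{h. length h = n}. HP P h * (if h ! t \<noteq> y (take t h) then 1 else 0))
      = (\<Sum>h\<in>{h. length h = n}. HP P h * g1 (take (Suc t) h))"
    using t unfolding g1_def by (intro sum.cong) auto
  also have "\<dots> = (\<Sum>h\<in>{h. length h = Suc t}. HP P h * g1 h)"
    using t by (intro E_marg[OF P1]) auto
  also have "\<dots> = (\<Sum>h\<in>{h. length h = Suc t}. HP P h * phi (take t h) (h ! t))"
    unfolding g1_def phi_def by simp
  also have "\<dots> = (\<Sum>h\<in>{h. length h = t}. HP P h * (\<Sum>k\<in>UNIV. P h k * phi h k))"
    by (rule E_step)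
  also have "\<dots> = (\<Sum>h\<in>{h. length h = t}. HP P h * g2 h)"
  proof (rule sum.cong)
    fix h
    have "(\<Sum>k\<in>UNIV. P h k * phi h k) = (\<Sum>k\<in>UNIV. P h k - (if k = y h then P h k else 0))"
      unfolding phi_def by (rule sum.cong) auto
    also have "\<dots> = 1 - P h (y h)" by (simp add: sum_subtractf P1)
    finally show "HP P h * (\<Sum>k\<in>UNIV. P h k * phi h k) = HP P h * g2 h" unfolding g2_def by simp
  qed simp
  also have "\<dots> = (\<Sum>h\<in>{h. length h = n}. HP P h * g2 (take t h))"
    using t by (intro E_marg[OF P1, symmetric]) auto
  finally show ?thesis unfolding g2_def .
qed


lemma gap_W_take:
  "s \<le> t \<Longrightarrow> gap_W e D l env s (take t h) = gap_W e D l env s h"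
proof (induction s)
  case 0 then show ?case by simp
next
  case (Suc s)
  then show ?case by (simp add: Let_def min_def)
qed

lemma pstar_le1: "pstar W x \<le> 1"
  unfolding pstar_def by (subst Max_le_iff) (auto intro: sm_le1)

lemma gap_prob_props:
  fixes ys :: "'k::finite"
  assumes "0 \<le> a" "a \<le> 1"
  shows "(\<Sum>k\<in>UNIV. gap_prob a 0 ys k) = 1" "gap_prob a 0 ys k \<ge> 0"
proof -
  have m: "max a 0 = a" using assms by simp
  have c: "real CARD('k) > 0" by simp
  have "(\<Sum>k\<in>UNIV. gap_prob a 0 ys k) = (\<Sum>k\<in>UNIV. (if k = ys then 1 - a else 0)) + (\<Sum>k\<in>(UNIV::'k set). a / real CARD('k))"
    unfolding gap_prob_def m Let_def by (simp add: sum.distrib)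
  also have "\<dots> = 1" using c by simp
  finally show "(\<Sum>k\<in>UNIV. gap_prob a 0 ys k) = 1" .
  show "gap_prob a 0 ys k \<ge> 0" unfolding gap_prob_def m Let_def using assms by auto
qed

lemma gap_map_range: "0 \<le> gap_map W x" "gap_map W x \<le> 1"
  unfolding gap_map_def using pstar_le1[of W x] by auto

lemma det_bound:
  fixes env :: "'k::finite list \<Rightarrow> 'k \<times> (real^'d)"
    and tie :: "'k list \<Rightarrow> real^'d^'k \<Rightarrow> real^'d \<Rightarrow> 'k"
    and X D :: real and T :: nat and U :: "real^'d^'k" and h :: "'k list"
  assumes K: "CARD('k) \<ge> 2" and X: "X > 0" and D: "D > 0"
    and xb: "\<forall>h. length h < T \<longrightarrow> norm (snd (env h)) \<le> X"
    and tie: "\<forall>h W x j. W $ j \<bullet> x \<le> W $ (tie h W x) \<bullet> x"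
    and U: "norm U \<le> D" and hl: "length h = T"
    and eta: "eta = ln 2 / (2 * real CARD('k) * X^2)"
  shows "(\<Sum>t<T. 1 - gaptron_p eta 0 D gap_map logloss tie env (take t h) (fst (env (take t h))))
     \<le> (\<Sum>t<T. logloss (fst (env (take t h))) (snd (env (take t h))) U) + real CARD('k) * X^2 * (norm U)^2 / ln 2"
proof -
  define Wt where "Wt t = gap_W eta D logloss env t h" for t
  define a where "a t = (norm (Wt t - U))^2" for t
  have etapos: "eta > 0" using eta X K by simp
  have Kr: "real CARD('k) \<ge> 2" using K by simp
  have step: "1 - gaptron_p eta 0 D gap_map logloss tie env (take t h) (fst (env (take t h)))
      - logloss (fst (env (take t h))) (snd (env (take t h))) U \<le> (a t - a (Suc t)) / (2 * eta)"
    if t: "t < T" for t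
  proof -
    define y where "y = fst (env (take t h))"
    define x where "x = snd (env (take t h))"
    define g where "g = GG y x (Wt t)"
    have xX: "norm x \<le> X" unfolding x_def using xb t hl by auto
    have Wnext: "Wt (Suc t) = proj_step eta D g (Wt t)"
      unfolding Wt_def g_def y_def x_def by (simp add: Let_def grad_logloss)
    have P: "gaptron_p eta 0 D gap_map logloss tie env (take t h) y
        = gap_prob (gap_map (Wt t) x) 0 (tie (take t h) (Wt t) x) y"
      unfolding gaptron_p_def Wt_def x_def using t hl by (simp add: Let_def gap_W_take)
    have gr: "1 - gap_prob (gap_map (Wt t) x) 0 (tie (take t h) (Wt t) x) y + eta / 2 * (norm g)^2
        \<le> logloss y x (Wt t)"
      unfolding eta g_def by (rule gap_round[OF Kr X xX]) (use tie in auto)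
    have cv: "logloss y x (Wt t) + g \<bullet> (U - Wt t) \<le> logloss y x U"
      unfolding g_def by (rule logloss_convex)
    have pj: "eta * (g \<bullet> (Wt t - U)) \<le> a t / 2 - a (Suc t) / 2 + eta^2 / 2 * (norm g)^2"
      unfolding a_def Wnext using proj_step_bound[OF etapos _ U, of g "Wt t"] D by simp
    have "g \<bullet> (Wt t - U) \<le> (a t - a (Suc t)) / (2 * eta) + eta / 2 * (norm g)^2"
    proof -
      have "g \<bullet> (Wt t - U) \<le> (a t / 2 - a (Suc t) / 2 + eta^2 / 2 * (norm g)^2) / eta"
        using pj etapos by (simp add: le_divide_eq mult.commute)
      also have "\<dots> = (a t - a (Suc t)) / (2 * eta) + eta / 2 * (norm g)^2"
        using etapos by (simp add: field_simps power2_eq_square)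
      finally show ?thesis .
    qed
    moreover have "g \<bullet> (U - Wt t) = - (g \<bullet> (Wt t - U))" by (simp add: inner_diff_right)
    ultimately show ?thesis using gr cv P unfolding y_def[symmetric] x_def[symmetric] by linarith
  qed
  have "(\<Sum>t<T. 1 - gaptron_p eta 0 D gap_map logloss tie env (take t h) (fst (env (take t h))))
      - (\<Sum>t<T. logloss (fst (env (take t h))) (snd (env (take t h))) U)
      = (\<Sum>t<T. 1 - gaptron_p eta 0 D gap_map logloss tie env (take t h) (fst (env (take t h)))
      - logloss (fst (env (take t h))) (snd (env (take t h))) U)"
    by (simp add: sum_subtractf)
  also have "\<dots> \<le> (\<Sum>t<T. (a t - a (Suc t)) / (2 * eta))"
    by (rule sum_mono) (use step in auto)
  also have "\<dots> = (a 0 - a T) / (2 * eta)"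
    by (simp add: sum_divide_distrib[symmetric] sum_lessThan_telescope')
  also have "\<dots> \<le> a 0 / (2 * eta)" using etapos unfolding a_def by (simp add: divide_right_mono)
  also have "a 0 / (2 * eta) = real CARD('k) * X^2 * (norm U)^2 / ln 2"
    unfolding a_def Wt_def eta using X by (simp add: field_simps)
  finally show ?thesis by simp
qed

theorem theorem1:
  fixes env :: "'k::finite list \<Rightarrow> 'k \<times> (real^'d)"
    and tie :: "'k list \<Rightarrow> real^'d^'k \<Rightarrow> real^'d \<Rightarrow> 'k"
    and X D :: real and T :: nat and U :: "real^'d^'k"
  assumes "CARD('k) \<ge> 2" and "X > 0" and "D > 0" and "T \<ge> 1"
    and "\<forall>h. length h < T \<longrightarrow> norm (snd (env h)) \<le> X"
    and "\<forall>h W x j. W $ j \<bullet> x \<le> W $ (tie h W x) \<bullet> x"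
    and "norm U \<le> D"
  shows "gaptron_E (ln 2 / (2 * real CARD('k) * X^2)) 0 D gap_map logloss tie env T
           (\<lambda>h. \<Sum>t<T. if h ! t \<noteq> fst (env (take t h)) then 1 else 0)
         \<le> gaptron_E (ln 2 / (2 * real CARD('k) * X^2)) 0 D gap_map logloss tie env T
             (\<lambda>h. \<Sum>t<T. logloss (fst (env (take t h))) (snd (env (take t h))) U)
           + real CARD('k) * X^2 * (norm U)^2 / ln 2"
proof -
  define eta where "eta = ln 2 / (2 * real CARD('k) * X^2)"
  define P where "P = gaptron_p eta 0 D gap_map logloss tie env"
  define C where "C = real CARD('k) * X^2 * (norm U)^2 / ln 2"
  have E: "gaptron_E eta 0 D gap_map logloss tie env T f = (\<Sum>h\<in>{h::'k list. length h = T}. HP P h * f h)" for f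
    unfolding gaptron_E_def hist_prob_def HP_def P_def ..
  have P1: "(\<Sum>k\<in>UNIV. P h k) = 1" for h
    unfolding P_def gaptron_p_def Let_def using gap_map_range by (intro gap_prob_props) auto
  have P0: "P h k \<ge> 0" for h k
    unfolding P_def gaptron_p_def Let_def using gap_map_range by (intro gap_prob_props) auto
  have HP0: "HP P h \<ge> 0" for h using P0 by (rule HP_nonneg)
  have "(\<Sum>h\<in>{h::'k list. length h = T}. HP P h * (\<Sum>t<T. if h ! t \<noteq> fst (env (take t h)) then 1 else 0))
      = (\<Sum>t<T. \<Sum>h\<in>{h::'k list. length h = T}. HP P h * (if h ! t \<noteq> fst (env (take t h)) then 1 else 0))"
    by (simp add: sum_distrib_left sum.swap[of _ _ "{..<T}"])
  also have "\<dots> = (\<Sum>t<T. \<Sum>h\<in>{h::'k list. length h = T}. HP P h * (1 - P (take t h) (fst (env (take t h)))))"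
    by (rule sum.cong[OF refl], rule E_mistake[OF P1]) auto
  also have "\<dots> = (\<Sum>h\<in>{h::'k list. length h = T}. HP P h * (\<Sum>t<T. 1 - P (take t h) (fst (env (take t h)))))"
    by (simp add: sum_distrib_left sum.swap[of _ "{..<T}"])
  also have "\<dots> \<le> (\<Sum>h\<in>{h::'k list. length h = T}. HP P h * ((\<Sum>t<T. logloss (fst (env (take t h))) (snd (env (take t h))) U) + C))"
  proof (rule sum_mono, rule mult_left_mono)
    fix h assume "h \<in> {h::'k list. length h = T}"
    then show "(\<Sum>t<T. 1 - P (take t h) (fst (env (take t h))))
        \<le> (\<Sum>t<T. logloss (fst (env (take t h))) (snd (env (take t h))) U) + C"
      unfolding P_def C_def using assms
      by (intro det_bound[where eta=eta]) (auto simp: eta_def)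
  qed (rule HP0)
  also have "\<dots> = (\<Sum>h\<in>{h::'k list. length h = T}. HP P h * (\<Sum>t<T. logloss (fst (env (take t h))) (snd (env (take t h))) U)) + C"
    using E_one[OF P1, where n=T] by (simp add: distrib_left sum.distrib sum_distrib_right[symmetric])
  finally show ?thesis unfolding eta_def[symmetric] C_def[symmetric] E .
qed

end
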